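(* Let $\mathcal{I}$ be an instance of vertex cover and let $\mathcal{T}_S(\mathcal{I})$ be a branch-and-bound tree generated by strong-branching (product score). Let $N$ be any internal node of $\mathcal{T}_S(\mathcal{I})$ and let $N'$ be a child of $N$ resulting from branching on $x_v$ where $v\notin I(\mathcal{I},N)$. Then $I(\mathcal{I},N)\subset I(\mathcal{I},N')$.
   Context: Vertex cover IP for a graph $G=(V,E)$: minimize $\sum_v x_v$ subject to $x_u+x_v\ge1$ ($uv\in E$), $x\in\{0,1\}^V$; LP relaxation uses $x\in[0,1]^V$. In a branch-and-bound tree each node $N$ is the LP relaxation plus constraints $x_j=0$ or $x_j=1$ for variables fixed on the path from the root, and branching on $x_v$ at $N$ produces the children obtained by adding $x_v=0$ and $x_v=1$. Strong branching with product score: at node $N$ with LP value $z$ and returned optimal solution $\hat x$, for each $j$ with $\hat x_j$ fractional compute the children's optimal LP values $z^0_j,z^1_j$ ($+\infty$ if infeasible), $\Delta^-_j=z^0_j-z$, $\Delta^+_j=z^1_j-z$, and branch on a maximizer of $\Delta^+_j\Delta^-_j$ (convention $0\cdot\infty=0$). $I(\mathcal{I},N)$ denotes the union, over all optimal solutions $x$ of the LP at node $N$, of $\{j: x_j\in\{0,1\}\}$. *)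

theory Defs
  imports Complex_Main "HOL-Library.Extended_Real"
begin

text \<open>A vertex cover instance is a finite simple graph with vertex set V and edge set E
  (ordered pairs; E is irreflexive and contained in V \<times> V).
  A branch-and-bound node is given by the pair (Z, W) of the sets of variables
  fixed to 0 and to 1 on the path from the root.\<close>

definition vc_feas :: "'a set \<Rightarrow> ('a \<times> 'a) set \<Rightarrow> 'a set \<Rightarrow> 'a set \<Rightarrow> ('a \<Rightarrow> real) set" where
  "vc_feas V E Z W = {x. (\<forall>v\<in>V. 0 \<le> x v \<and> x v \<le> 1)
                       \<and> (\<forall>(u, v)\<in>E. x u + x v \<ge> 1)
                       \<and> (\<forall>j\<in>Z. x j = 0) \<and> (\<forall>j\<in>W. x j = 1)}"

text \<open>Optimal LP value of the node (\<open>\<infinity>\<close> if infeasible).\<close>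
definition vc_lp_val :: "'a set \<Rightarrow> ('a \<times> 'a) set \<Rightarrow> 'a set \<Rightarrow> 'a set \<Rightarrow> ereal" where
  "vc_lp_val V E Z W = (INF x\<in>vc_feas V E Z W. ereal (\<Sum>v\<in>V. x v))"

definition vc_opt :: "'a set \<Rightarrow> ('a \<times> 'a) set \<Rightarrow> 'a set \<Rightarrow> 'a set \<Rightarrow> ('a \<Rightarrow> real) \<Rightarrow> bool" where
  "vc_opt V E Z W x \<longleftrightarrow> x \<in> vc_feas V E Z W \<and> ereal (\<Sum>v\<in>V. x v) = vc_lp_val V E Z W"

definition vc_I :: "'a set \<Rightarrow> ('a \<times> 'a) set \<Rightarrow> 'a set \<Rightarrow> 'a set \<Rightarrow> 'a set" where
  "vc_I V E Z W = {j\<in>V. \<exists>x. vc_opt V E Z W x \<and> (x j = 0 \<or> x j = 1)}"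

text \<open>Strong branching product score (in ereal, where 0 * \<infinity> = 0).\<close>
definition sb_score :: "'a set \<Rightarrow> ('a \<times> 'a) set \<Rightarrow> 'a set \<Rightarrow> 'a set \<Rightarrow> 'a \<Rightarrow> ereal" where
  "sb_score V E Z W j =
     (vc_lp_val V E Z (insert j W) - vc_lp_val V E Z W) *
     (vc_lp_val V E (insert j Z) W - vc_lp_val V E Z W)"

definition sb_branch :: "'a set \<Rightarrow> ('a \<times> 'a) set \<Rightarrow> 'a set \<Rightarrow> 'a set \<Rightarrow> ('a \<Rightarrow> real) \<Rightarrow> 'a \<Rightarrow> bool" where
  "sb_branch V E Z W xh j \<longleftrightarrow>
     vc_opt V E Z W xh \<and> j \<in> V \<and> 0 < xh j \<and> xh j < 1 \<and>
     (\<forall>k\<in>V. 0 < xh k \<and> xh k < 1 \<longrightarrow> sb_score V E Z W k \<le> sb_score V E Z W j)"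

inductive sb_node :: "'a set \<Rightarrow> ('a \<times> 'a) set \<Rightarrow> 'a set \<times> 'a set \<Rightarrow> bool"
  for V :: "'a set" and E :: "('a \<times> 'a) set" where
  root: "sb_node V E ({}, {})"
| child0: "sb_node V E (Z, W) \<Longrightarrow> sb_branch V E Z W xh j \<Longrightarrow> sb_node V E (insert j Z, W)"
| child1: "sb_node V E (Z, W) \<Longrightarrow> sb_branch V E Z W xh j \<Longrightarrow> sb_node V E (Z, insert j W)"

end

theory Submission
  imports Defs "HOL-Library.FuncSet"
begin
definition grid :: "real \<Rightarrow> bool" where "grid r \<longleftrightarrow> r = 0 \<or> r = 1/2 \<or> r = 1"
definition badset :: "'a set \<Rightarrow> ('a \<Rightarrow> real) \<Rightarrow> 'a set" where
  "badset V x = {i\<in>V. \<not> grid (x i)}"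

lemma feasD:
  assumes "x \<in> vc_feas V E Z W"
  shows "\<And>v. v\<in>V \<Longrightarrow> 0 \<le> x v" "\<And>v. v\<in>V \<Longrightarrow> x v \<le> 1"
    "\<And>u w. (u,w)\<in>E \<Longrightarrow> x u + x w \<ge> 1" "\<And>j. j\<in>Z \<Longrightarrow> x j = 0" "\<And>j. j\<in>W \<Longrightarrow> x j = 1"
  using assms unfolding vc_feas_def by auto

lemma feasI:
  assumes "\<And>v. v\<in>V \<Longrightarrow> 0 \<le> x v" "\<And>v. v\<in>V \<Longrightarrow> x v \<le> 1"
    "\<And>u w. (u,w)\<in>E \<Longrightarrow> x u + x w \<ge> 1" "\<And>j. j\<in>Z \<Longrightarrow> x j = 0" "\<And>j. j\<in>W \<Longrightarrow> x j = 1"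
  shows "x \<in> vc_feas V E Z W"
  using assms unfolding vc_feas_def by auto

lemma pert:
  assumes EV: "E \<subseteq> V \<times> V" and xf: "x \<in> vc_feas V E Z W"
  and c1: "\<forall>i\<in>badset V x. x i < 1/2 \<longrightarrow> \<epsilon> \<le> x i \<and> -\<epsilon> \<le> 1/2 - x i"
  and c2: "\<forall>i\<in>badset V x. x i > 1/2 \<longrightarrow> \<epsilon> \<le> 1 - x i \<and> -\<epsilon> \<le> x i - 1/2"
  shows "(\<lambda>i. x i + \<epsilon> * (if i \<in> badset V x then (if x i > 1/2 then 1 else -1) else 0)) \<in> vc_feas V E Z W"
proof (rule feasI)
  let ?D = "badset V x"
  have bd: "i \<in> ?D \<longleftrightarrow> i \<in> V \<and> x i \<noteq> 0 \<and> x i \<noteq> 1/2 \<and> x i \<noteq> 1" for i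
    unfolding badset_def grid_def by auto
  note f = feasD[OF xf]
  show "0 \<le> x v + \<epsilon> * (if v \<in> ?D then (if x v > 1/2 then 1 else -1) else 0)" if "v \<in> V" for v
    using f(1,2)[OF that] c1 c2 bd[of v] that by (cases "x v < 1/2") auto
  show "x v + \<epsilon> * (if v \<in> ?D then (if x v > 1/2 then 1 else -1) else 0) \<le> 1" if "v \<in> V" for v
    using f(1,2)[OF that] c1 c2 bd[of v] that by (cases "x v < 1/2") auto
  show "x j + \<epsilon> * (if j \<in> ?D then (if x j > 1/2 then 1 else -1) else 0) = 0" if "j \<in> Z" for j
    using f(4)[OF that] bd[of j] by auto
  show "x j + \<epsilon> * (if j \<in> ?D then (if x j > 1/2 then 1 else -1) else 0) = 1" if "j \<in> W" for j
    using f(5)[OF that] bd[of j] by auto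
  show "1 \<le> x u + \<epsilon> * (if u \<in> ?D then (if x u > 1/2 then 1 else -1) else 0) +
            (x w + \<epsilon> * (if w \<in> ?D then (if x w > 1/2 then 1 else -1) else 0))"
    if e: "(u, w) \<in> E" for u w
  proof -
    have uv: "u \<in> V" "w \<in> V" using e EV by auto
    have s: "x u + x w \<ge> 1" by (rule f(3)[OF e])
    have bu: "0 \<le> x u" "x u \<le> 1" "0 \<le> x w" "x w \<le> 1" using f(1,2) uv by auto
    show ?thesis
      using s bu c1[rule_format, of u] c1[rule_format, of w] c2[rule_format, of u] c2[rule_format, of w] bd[of u] bd[of w] uv
      by (cases "x u < 1/2"; cases "x w < 1/2"; cases "u \<in> ?D"; cases "w \<in> ?D") (auto simp: algebra_simps)
  qed
qed

lemma round_half: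
  assumes fin: "finite V" and EV: "E \<subseteq> V \<times> V" and xf: "x \<in> vc_feas V E Z W"
  shows "\<exists>x'. x' \<in> vc_feas V E Z W \<and> (\<forall>i\<in>V. grid (x' i)) \<and> (\<Sum>i\<in>V. x' i) \<le> (\<Sum>i\<in>V. x i)
           \<and> (\<forall>i. i \<notin> badset V x \<longrightarrow> x' i = x i)"
  using xf
proof (induction "card (badset V x)" arbitrary: x rule: less_induct)
  case less
  let ?D = "badset V x"
  note f = feasD[OF less.prems]
  have bd: "i \<in> ?D \<longleftrightarrow> i \<in> V \<and> x i \<noteq> 0 \<and> x i \<noteq> 1/2 \<and> x i \<noteq> 1" for i
    unfolding badset_def grid_def by auto
  show ?case
  proof (cases "?D = {}")
    case True
    then show ?thesis using less.prems unfolding badset_def by (intro exI[of _ x]) auto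
  next
    case nonempty: False
    have finD: "finite ?D" using fin unfolding badset_def by auto
    define dd where "dd i = min (x i) (1 - x i)" for i
    define \<sigma> where "\<sigma> i = (if i \<in> ?D then (if x i > 1/2 then 1 else -1) else (0::real))" for i
    have ddD: "0 < dd i \<and> dd i < 1/2" if "i \<in> ?D" for i
      using bd[of i] that f(1,2)[of i] unfolding dd_def by (auto simp: min_def)
    define c where "c = (\<Sum>i\<in>V. \<sigma> i)"
    have "\<exists>\<epsilon> i0. (\<forall>i\<in>?D. x i < 1/2 \<longrightarrow> \<epsilon> \<le> x i \<and> -\<epsilon> \<le> 1/2 - x i)
       \<and> (\<forall>i\<in>?D. x i > 1/2 \<longrightarrow> \<epsilon> \<le> 1 - x i \<and> -\<epsilon> \<le> x i - 1/2)
       \<and> i0 \<in> ?D \<and> grid (x i0 + \<epsilon> * \<sigma> i0) \<and> \<epsilon> * c \<le> 0"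
    proof (cases "c \<ge> 0")
      case True
      define M where "M = Max (dd ` ?D)"
      have "M \<in> dd ` ?D" unfolding M_def using finD nonempty by (intro Max_in) auto
      then obtain i0 where i0: "i0 \<in> ?D" "dd i0 = M" by auto
      have le: "dd i \<le> M" if "i \<in> ?D" for i unfolding M_def using finD that by auto
      have M: "0 < M" "M < 1/2" using ddD[OF i0(1)] i0(2) by auto
      show ?thesis
      proof (intro exI[of _ "M - 1/2"] exI[of _ i0] conjI ballI impI)
        fix i assume i: "i \<in> ?D" "x i < 1/2"
        then show "M - 1/2 \<le> x i" using M f(1)[of i] bd[of i] by auto
        show "- (M - 1/2) \<le> 1/2 - x i" using le[OF i(1)] i unfolding dd_def by auto
      next
        fix i assume i: "i \<in> ?D" "x i > 1/2"
        then show "M - 1/2 \<le> 1 - x i" using M f(2)[of i] bd[of i] by auto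
        show "- (M - 1/2) \<le> x i - 1/2" using le[OF i(1)] i unfolding dd_def by auto
      next
        show "i0 \<in> ?D" by fact
        show "grid (x i0 + (M - 1/2) * \<sigma> i0)"
          using i0 bd[of i0] unfolding grid_def \<sigma>_def dd_def by (cases "x i0 < 1/2") (auto simp: algebra_simps)
        show "(M - 1/2) * c \<le> 0" using True M by (simp add: mult_nonpos_nonneg)
      qed
    next
      case False2: False
      define m where "m = Min (dd ` ?D)"
      have "m \<in> dd ` ?D" unfolding m_def using finD nonempty by (intro Min_in) auto
      then obtain i0 where i0: "i0 \<in> ?D" "dd i0 = m" by auto
      have le: "m \<le> dd i" if "i \<in> ?D" for i unfolding m_def using finD that by auto
      have M: "0 < m" "m < 1/2" using ddD[OF i0(1)] i0(2) by auto
      show ?thesis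
      proof (intro exI[of _ "m"] exI[of _ i0] conjI ballI impI)
        fix i assume i: "i \<in> ?D" "x i < 1/2"
        then show "m \<le> x i" using le[OF i(1)] unfolding dd_def by auto
        show "- m \<le> 1/2 - x i" using M i by auto
      next
        fix i assume i: "i \<in> ?D" "x i > 1/2"
        then show "m \<le> 1 - x i" using le[OF i(1)] unfolding dd_def by auto
        show "- m \<le> x i - 1/2" using M i by auto
      next
        show "i0 \<in> ?D" by fact
        show "grid (x i0 + m * \<sigma> i0)"
          using i0 bd[of i0] unfolding grid_def \<sigma>_def dd_def by (cases "x i0 < 1/2") (auto simp: algebra_simps)
        show "m * c \<le> 0" using False2 M by (simp add: mult_pos_neg less_imp_le)
      qed
    qed
    then obtain \<epsilon> i0 where c1: "\<forall>i\<in>?D. x i < 1/2 \<longrightarrow> \<epsilon> \<le> x i \<and> -\<epsilon> \<le> 1/2 - x i"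
       and c2: "\<forall>i\<in>?D. x i > 1/2 \<longrightarrow> \<epsilon> \<le> 1 - x i \<and> -\<epsilon> \<le> x i - 1/2"
       and i0: "i0 \<in> ?D" "grid (x i0 + \<epsilon> * \<sigma> i0)" and ec: "\<epsilon> * c \<le> 0" by blast
    define y where "y i = x i + \<epsilon> * \<sigma> i" for i
    have yf: "y \<in> vc_feas V E Z W"
      using pert[OF EV less.prems c1 c2] unfolding y_def \<sigma>_def by simp
    have ysum: "(\<Sum>i\<in>V. y i) = (\<Sum>i\<in>V. x i) + \<epsilon> * c"
      unfolding y_def c_def by (simp add: sum.distrib sum_distrib_left)
    have ynD: "y i = x i" if "i \<notin> ?D" for i using that unfolding y_def \<sigma>_def by simp
    have sub: "badset V y \<subseteq> ?D - {i0}"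
    proof
      fix i assume i: "i \<in> badset V y"
      then have "i \<in> V" "\<not> grid (y i)" unfolding badset_def by auto
      moreover have "i \<noteq> i0" using i0(2) calculation unfolding y_def by auto
      moreover have "i \<in> ?D" using calculation ynD[of i] unfolding badset_def by force
      ultimately show "i \<in> ?D - {i0}" by auto
    qed
    have "card (badset V y) < card ?D"
      using card_mono[OF _ sub] card_Diff1_less[OF finD i0(1)] finD by (meson finite_Diff le_less_trans)
    from less.hyps[OF this yf] obtain x' where x': "x' \<in> vc_feas V E Z W" "\<forall>i\<in>V. grid (x' i)"
      "(\<Sum>i\<in>V. x' i) \<le> (\<Sum>i\<in>V. y i)" "\<forall>i. i \<notin> badset V y \<longrightarrow> x' i = y i" by blast
    show ?thesis
    proof (intro exI[of _ x'] conjI allI impI)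
      show "(\<Sum>i\<in>V. x' i) \<le> (\<Sum>i\<in>V. x i)" using x'(3) ysum ec by linarith
      fix i assume "i \<notin> ?D"
      then show "x' i = x i" using x'(4) ynD sub by auto
    qed (use x' in auto)
  qed
qed

lemma opt_char:
  "vc_opt V E Z W y \<longleftrightarrow> y \<in> vc_feas V E Z W \<and> (\<forall>x\<in>vc_feas V E Z W. (\<Sum>i\<in>V. y i) \<le> (\<Sum>i\<in>V. x i))"
proof
  assume a: "vc_opt V E Z W y"
  then have y: "y \<in> vc_feas V E Z W" and eq: "ereal (\<Sum>i\<in>V. y i) = vc_lp_val V E Z W"
    unfolding vc_opt_def by auto
  have "ereal (\<Sum>i\<in>V. y i) \<le> ereal (\<Sum>i\<in>V. x i)" if "x \<in> vc_feas V E Z W" for x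
    unfolding eq vc_lp_val_def by (rule INF_lower[OF that])
  then show "y \<in> vc_feas V E Z W \<and> (\<forall>x\<in>vc_feas V E Z W. (\<Sum>i\<in>V. y i) \<le> (\<Sum>i\<in>V. x i))"
    using y by auto
next
  assume a: "y \<in> vc_feas V E Z W \<and> (\<forall>x\<in>vc_feas V E Z W. (\<Sum>i\<in>V. y i) \<le> (\<Sum>i\<in>V. x i))"
  have "vc_lp_val V E Z W = ereal (\<Sum>i\<in>V. y i)"
    unfolding vc_lp_val_def
  proof (rule antisym)
    show "(INF x\<in>vc_feas V E Z W. ereal (\<Sum>v\<in>V. x v)) \<le> ereal (\<Sum>i\<in>V. y i)"
      using a by (intro INF_lower) auto
    show "ereal (\<Sum>i\<in>V. y i) \<le> (INF x\<in>vc_feas V E Z W. ereal (\<Sum>v\<in>V. x v))"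
      using a by (intro INF_greatest) auto
  qed
  then show "vc_opt V E Z W y" using a unfolding vc_opt_def by auto
qed

lemma exists_opt:
  assumes fin: "finite V" and EV: "E \<subseteq> V \<times> V" and xf: "x \<in> vc_feas V E Z W"
  shows "\<exists>y. vc_opt V E Z W y \<and> (\<forall>i\<in>V. grid (y i))"
proof -
  define H where "H = {z\<in>vc_feas V E Z W. \<forall>i\<in>V. grid (z i)}"
  define T where "T = (\<lambda>z. \<Sum>i\<in>V. z i) ` H"
  have "T \<subseteq> (\<lambda>f. \<Sum>i\<in>V. f i) ` (PiE V (\<lambda>_. {0, 1/2, 1::real}))"
  proof
    fix t assume "t \<in> T"
    then obtain z where z: "z \<in> H" "t = (\<Sum>i\<in>V. z i)" unfolding T_def by auto
    have "restrict z V \<in> PiE V (\<lambda>_. {0, 1/2, 1::real})"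
      using z(1) unfolding H_def grid_def by (auto simp: PiE_iff)
    moreover have "t = (\<Sum>i\<in>V. restrict z V i)" using z(2) by simp
    ultimately show "t \<in> (\<lambda>f. \<Sum>i\<in>V. f i) ` (PiE V (\<lambda>_. {0, 1/2, 1::real}))" by blast
  qed
  then have finT: "finite T" using fin by (meson finite_PiE finite.emptyI finite.insertI finite_imageI finite_subset)
  obtain x' where x': "x' \<in> vc_feas V E Z W" "\<forall>i\<in>V. grid (x' i)"
    using round_half[OF fin EV xf] by blast
  then have "T \<noteq> {}" unfolding T_def H_def by auto
  then have "Min T \<in> T" using finT by (rule Min_in[rotated])
  then obtain y where y: "y \<in> H" "(\<Sum>i\<in>V. y i) = Min T" unfolding T_def by auto
  have "(\<Sum>i\<in>V. y i) \<le> (\<Sum>i\<in>V. z i)" if zf: "z \<in> vc_feas V E Z W" for z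
  proof -
    obtain z' where z': "z' \<in> vc_feas V E Z W" "\<forall>i\<in>V. grid (z' i)" "(\<Sum>i\<in>V. z' i) \<le> (\<Sum>i\<in>V. z i)"
      using round_half[OF fin EV zf] by blast
    have "(\<Sum>i\<in>V. z' i) \<in> T" using z' unfolding T_def H_def by auto
    then have "Min T \<le> (\<Sum>i\<in>V. z' i)" using finT by simp
    then show ?thesis using y(2) z'(3) by linarith
  qed
  then show ?thesis using y(1) unfolding H_def opt_char by auto
qed

definition rnd1 :: "real \<Rightarrow> real" where "rnd1 p = (if p = 0 then 0 else if p = 1 then 1 else 1/2)"
definition rnd2 :: "real \<Rightarrow> real" where "rnd2 p = (if p < 1/2 then 0 else if p = 1/2 then 1/2 else 1)"
lemma r1e: "grid a \<Longrightarrow> grid b \<Longrightarrow> grid c \<Longrightarrow> grid d \<Longrightarrow> a + c \<ge> 1 \<Longrightarrow> b + d \<ge> 1 \<Longrightarrow> rnd1((a+b)/2) + rnd1((c+d)/2) \<ge> 1"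
  unfolding grid_def rnd1_def by auto
lemma r2e: "grid a \<Longrightarrow> grid b \<Longrightarrow> grid c \<Longrightarrow> grid d \<Longrightarrow> a + c \<ge> 1 \<Longrightarrow> b + d \<ge> 1 \<Longrightarrow> rnd2((a+b)/2) + rnd2((c+d)/2) \<ge> 1"
  unfolding grid_def rnd2_def by auto
lemma rsum: "grid a \<Longrightarrow> grid b \<Longrightarrow> rnd1((a+b)/2) + rnd2((a+b)/2) = a + b"
  unfolding grid_def rnd1_def rnd2_def by auto
lemma rnd1_b: "0 \<le> rnd1 p" "rnd1 p \<le> 1" unfolding rnd1_def by auto
lemma rnd2_b: "0 \<le> rnd2 p" "rnd2 p \<le> 1" unfolding rnd2_def by auto

lemma child0_feas:
  assumes EV: "E \<subseteq> V \<times> V" and irr: "\<forall>(a, b)\<in>E. a \<noteq> b" and xf: "xh \<in> vc_feas V E Z W"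
    and v: "v \<in> V" "0 < xh v" "xh v < 1"
  shows "(\<lambda>i. if i = v then 0 else if (i,v) \<in> E \<or> (v,i) \<in> E then 1 else xh i) \<in> vc_feas V E (insert v Z) W"
proof (rule feasI)
  note f = feasD[OF xf]
  show "0 \<le> (if i = v then 0 else if (i,v) \<in> E \<or> (v,i) \<in> E then 1 else xh i)" if "i \<in> V" for i
    using f(1)[OF that] by auto
  show "(if i = v then 0 else if (i,v) \<in> E \<or> (v,i) \<in> E then 1 else xh i) \<le> 1" if "i \<in> V" for i
    using f(2)[OF that] by auto
  show "1 \<le> (if a = v then 0 else if (a,v) \<in> E \<or> (v,a) \<in> E then 1 else xh a) +
           (if b = v then 0 else if (b,v) \<in> E \<or> (v,b) \<in> E then 1 else xh b)" if e: "(a,b) \<in> E" for a b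
  proof -
    have "a \<in> V" "b \<in> V" "a \<noteq> b" using e EV irr by auto
    then show ?thesis using f(1)[of a] f(1)[of b] f(3)[OF e] e by auto
  qed
  show "(if j = v then 0 else if (j,v) \<in> E \<or> (v,j) \<in> E then 1 else xh j) = 0" if "j \<in> insert v Z" for j
  proof (cases "j = v")
    case False
    then have jZ: "j \<in> Z" using that by auto
    have "(j,v) \<notin> E" using f(3)[of j v] f(4)[OF jZ] v by auto
    moreover have "(v,j) \<notin> E" using f(3)[of v j] f(4)[OF jZ] v by auto
    ultimately show ?thesis using False f(4)[OF jZ] by auto
  qed simp
  show "(if j = v then 0 else if (j,v) \<in> E \<or> (v,j) \<in> E then 1 else xh j) = 1" if "j \<in> W" for j
    using f(5)[OF that] v by auto
qed

lemma child1_feas: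
  assumes xf: "xh \<in> vc_feas V E Z W" and v: "v \<in> V" "0 < xh v" "xh v < 1"
  shows "xh(v := 1) \<in> vc_feas V E Z (insert v W)"
proof (rule feasI)
  note f = feasD[OF xf]
  show "0 \<le> (xh(v:=1)) i" if "i \<in> V" for i using f(1)[OF that] by auto
  show "(xh(v:=1)) i \<le> 1" if "i \<in> V" for i using f(2)[OF that] by auto
  show "1 \<le> (xh(v:=1)) a + (xh(v:=1)) b" if e: "(a,b) \<in> E" for a b
    using f(3)[OF e] f(2)[of a] f(2)[of b] v by auto
  show "(xh(v:=1)) j = 0" if "j \<in> Z" for j using f(4)[OF that] v by auto
  show "(xh(v:=1)) j = 1" if "j \<in> insert v W" for j using f(5)[of j] that by auto
qed

theorem theorem2p3:
  fixes V :: "'a set" and E :: "('a \<times> 'a) set"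
    and Z W Z' W' :: "'a set" and xh :: "'a \<Rightarrow> real" and v :: 'a
  assumes "finite V"
    and "E \<subseteq> V \<times> V"
    and "\<forall>(a, b)\<in>E. a \<noteq> b"
    and "sb_node V E (Z, W)"
    and "sb_branch V E Z W xh v"
    and "(Z', W') = (insert v Z, W) \<or> (Z', W') = (Z, insert v W)"
    and "v \<notin> vc_I V E Z W"
  shows "vc_I V E Z W \<subset> vc_I V E Z' W'"
proof -
  note fin = assms(1) and EV = assms(2)
  from assms(5) have opth: "vc_opt V E Z W xh" and v: "v \<in> V" "0 < xh v" "xh v < 1"
    unfolding sb_branch_def by auto
  have xhf: "xh \<in> vc_feas V E Z W" using opth unfolding vc_opt_def by auto
  have cases': "(Z' = insert v Z \<and> W' = W) \<or> (Z' = Z \<and> W' = insert v W)" using assms(6) by auto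
  have subs: "Z \<subseteq> Z'" "W \<subseteq> W'" "Z' \<subseteq> insert v Z" "W' \<subseteq> insert v W" "v \<in> Z' \<or> v \<in> W'"
    using cases' by auto
  have "\<exists>x. x \<in> vc_feas V E Z' W'"
    using cases' child0_feas[OF EV assms(3) xhf v] child1_feas[OF xhf v] by blast
  then obtain x0 where "x0 \<in> vc_feas V E Z' W'" by blast
  from exists_opt[OF fin EV this] obtain y0 where y0: "vc_opt V E Z' W' y0" "\<forall>i\<in>V. grid (y0 i)" by blast
  have y0f: "y0 \<in> vc_feas V E Z' W'" and y0min: "\<forall>z\<in>vc_feas V E Z' W'. (\<Sum>i\<in>V. y0 i) \<le> (\<Sum>i\<in>V. z i)"
    using y0(1) unfolding opt_char by auto
  note fy = feasD[OF y0f]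
  have vI: "v \<in> vc_I V E Z' W'"
    using subs(5) fy(4)[of v] fy(5)[of v] y0(1) v(1) unfolding vc_I_def by auto
  have sub: "vc_I V E Z W \<subseteq> vc_I V E Z' W'"
  proof
    fix j assume "j \<in> vc_I V E Z W"
    then obtain x where j: "j \<in> V" and xo: "vc_opt V E Z W x" and xj: "x j = 0 \<or> x j = 1"
      unfolding vc_I_def by auto
    have xf: "x \<in> vc_feas V E Z W" and xmin: "\<forall>z\<in>vc_feas V E Z W. (\<Sum>i\<in>V. x i) \<le> (\<Sum>i\<in>V. z i)"
      using xo unfolding opt_char by auto
    obtain x' where x': "x' \<in> vc_feas V E Z W" "\<forall>i\<in>V. grid (x' i)" "(\<Sum>i\<in>V. x' i) \<le> (\<Sum>i\<in>V. x i)"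
      "\<forall>i. i \<notin> badset V x \<longrightarrow> x' i = x i"
      using round_half[OF fin EV xf] by blast
    have x'j: "x' j = x j" using x'(4) xj unfolding badset_def grid_def by auto
    have x'min: "\<forall>z\<in>vc_feas V E Z W. (\<Sum>i\<in>V. x' i) \<le> (\<Sum>i\<in>V. z i)"
      using x'(3) xmin by force
    have x'o: "vc_opt V E Z W x'" unfolding opt_char using x'(1) x'min by auto
    have x'v: "x' v = 1/2"
    proof -
      have "\<not> (x' v = 0 \<or> x' v = 1)" using assms(7) x'o v(1) unfolding vc_I_def by auto
      then show ?thesis using x'(2) v(1) unfolding grid_def by auto
    qed
    note fx = feasD[OF x'(1)]
    show "j \<in> vc_I V E Z' W'"
    proof (cases "y0 j = 0 \<or> y0 j = 1")
      case True
      then show ?thesis using j y0(1) unfolding vc_I_def by auto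
    next
      case False
      then have y0j: "y0 j = 1/2" using y0(2) j unfolding grid_def by auto
      define r1 where "r1 i = (if i \<in> V then rnd1 ((x' i + y0 i)/2) else x' i)" for i
      define r2 where "r2 i = (if i \<in> V then rnd2 ((x' i + y0 i)/2) else y0 i)" for i
      have r1f: "r1 \<in> vc_feas V E Z W"
      proof (rule feasI)
        show "0 \<le> r1 i" "r1 i \<le> 1" if "i \<in> V" for i unfolding r1_def using that rnd1_b by auto
        show "1 \<le> r1 a + r1 b" if e: "(a,b) \<in> E" for a b
        proof -
          have ab: "a \<in> V" "b \<in> V" using e EV by auto
          show ?thesis unfolding r1_def using ab r1e[OF x'(2)[rule_format, OF ab(1)] y0(2)[rule_format, OF ab(1)]
              x'(2)[rule_format, OF ab(2)] y0(2)[rule_format, OF ab(2)] fx(3)[OF e] fy(3)[OF e]] by simp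
        qed
        show "r1 i = 0" if "i \<in> Z" for i
          using fx(4)[OF that] fy(4)[of i] subs(1) that unfolding r1_def rnd1_def by auto
        show "r1 i = 1" if "i \<in> W" for i
          using fx(5)[OF that] fy(5)[of i] subs(2) that unfolding r1_def rnd1_def by auto
      qed
      have r2f: "r2 \<in> vc_feas V E Z' W'"
      proof (rule feasI)
        show "0 \<le> r2 i" "r2 i \<le> 1" if "i \<in> V" for i unfolding r2_def using that rnd2_b by auto
        show "1 \<le> r2 a + r2 b" if e: "(a,b) \<in> E" for a b
        proof -
          have ab: "a \<in> V" "b \<in> V" using e EV by auto
          show ?thesis unfolding r2_def using ab r2e[OF x'(2)[rule_format, OF ab(1)] y0(2)[rule_format, OF ab(1)]
              x'(2)[rule_format, OF ab(2)] y0(2)[rule_format, OF ab(2)] fx(3)[OF e] fy(3)[OF e]] by simp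
        qed
        show "r2 i = 0" if i: "i \<in> Z'" for i
        proof (cases "i = v")
          case True then show ?thesis using x'v fy(4)[OF i] v(1) unfolding r2_def rnd2_def by auto
        next
          case False then have "i \<in> Z" using subs(3) i by auto
          then show ?thesis using fx(4)[of i] fy(4)[OF i] unfolding r2_def rnd2_def by auto
        qed
        show "r2 i = 1" if i: "i \<in> W'" for i
        proof (cases "i = v")
          case True then show ?thesis using x'v fy(5)[OF i] v(1) unfolding r2_def rnd2_def by auto
        next
          case False then have "i \<in> W" using subs(4) i by auto
          then show ?thesis using fx(5)[of i] fy(5)[OF i] unfolding r2_def rnd2_def by auto
        qed
      qed
      have "(\<Sum>i\<in>V. r1 i) + (\<Sum>i\<in>V. r2 i) = (\<Sum>i\<in>V. r1 i + r2 i)" by (simp add: sum.distrib)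
      also have "\<dots> = (\<Sum>i\<in>V. x' i + y0 i)"
        by (rule sum.cong) (use x'(2) y0(2) rsum in \<open>auto simp: r1_def r2_def\<close>)
      also have "\<dots> = (\<Sum>i\<in>V. x' i) + (\<Sum>i\<in>V. y0 i)" by (simp add: sum.distrib)
      finally have eqs: "(\<Sum>i\<in>V. r1 i) + (\<Sum>i\<in>V. r2 i) = (\<Sum>i\<in>V. x' i) + (\<Sum>i\<in>V. y0 i)" .
      have "(\<Sum>i\<in>V. x' i) \<le> (\<Sum>i\<in>V. r1 i)" using x'min r1f by auto
      then have "(\<Sum>i\<in>V. r2 i) \<le> (\<Sum>i\<in>V. y0 i)" using eqs by linarith
      then have "\<forall>z\<in>vc_feas V E Z' W'. (\<Sum>i\<in>V. r2 i) \<le> (\<Sum>i\<in>V. z i)" using y0min by force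
      then have r2o: "vc_opt V E Z' W' r2" unfolding opt_char using r2f by auto
      have "r2 j = 0 \<or> r2 j = 1" using j xj x'j y0j unfolding r2_def rnd2_def by auto
      then show ?thesis using r2o j unfolding vc_I_def by auto
    qed
  qed
  show ?thesis using sub vI assms(7) by blast
qed
end
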